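(* Let $m\ge 1$ and $\epsilon>0$. Suppose $p_1,\dots,p_m$ and $q_1,\dots,q_m$ are unknown probability distributions on $\{0,1\}$, accessible in the query model: for any index $i$ one may request independent samples from $p_i$ or from $q_i$. There is a randomized algorithm that outputs "Yes" with probability at least $2/3$ if $p_i=q_i$ for all $1\le i\le m$, outputs "No" with probability at least $2/3$ if $\frac{1}{m}\sum_{i=1}^m\|p_i-q_i\|_2^2>\epsilon^2$, and uses in total $O\!\left(\frac{(1+\log m)^4}{\epsilon^2}\right)$ samples.
   Context: $\|p-q\|_2$ denotes the Euclidean norm of the difference of the probability vectors $p=(p(0),p(1))$ and $q=(q(0),q(1))$. *)

theory Defs
  imports "HOL-Probability.Probability"
begin

text \<open>Randomized adaptive algorithms in the query model, as finite decision trees.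
  A node either outputs an answer (True = Yes, False = No), flips a fair coin
  (internal randomness), or requests one fresh independent sample from p_i
  (flag True) or from q_i (flag False) and continues depending on the bit seen.
  Distributions on {0,1} are represented as bool pmfs (False = 0, True = 1).\<close>

datatype alg = Done bool | Coin "bool \<Rightarrow> alg" | Query nat bool "bool \<Rightarrow> alg"

primrec run :: "(nat \<Rightarrow> bool pmf) \<Rightarrow> (nat \<Rightarrow> bool pmf) \<Rightarrow> alg \<Rightarrow> bool pmf" where
  "run P Q (Done b) = return_pmf b"
| "run P Q (Coin f) = bind_pmf (bernoulli_pmf (1/2)) (\<lambda>c. run P Q (f c))"
| "run P Q (Query i s f) = bind_pmf (if s then P i else Q i) (\<lambda>x. run P Q (f x))"

primrec num_samples :: "alg \<Rightarrow> nat" where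
  "num_samples (Done b) = 0"
| "num_samples (Coin f) = max (num_samples (f True)) (num_samples (f False))"
| "num_samples (Query i s f) = 1 + max (num_samples (f True)) (num_samples (f False))"

definition l2sq :: "bool pmf \<Rightarrow> bool pmf \<Rightarrow> real" where
  "l2sq p q = (\<Sum>x\<in>(UNIV::bool set). (pmf p x - pmf q x)^2)"

end

theory Submission
  imports Defs
begin


datatype 'a gt = Ret 'a | GC "bool \<Rightarrow> 'a gt" | GQ nat bool "bool \<Rightarrow> 'a gt"

primrec gbind :: "'a gt \<Rightarrow> ('a \<Rightarrow> 'b gt) \<Rightarrow> 'b gt" where
  "gbind (Ret x) f = f x"
| "gbind (GC g) f = GC (\<lambda>b. gbind (g b) f)"
| "gbind (GQ i s g) f = GQ i s (\<lambda>b. gbind (g b) f)"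

primrec ns :: "'a gt \<Rightarrow> nat" where
  "ns (Ret x) = 0"
| "ns (GC f) = max (ns (f True)) (ns (f False))"
| "ns (GQ i s f) = 1 + max (ns (f True)) (ns (f False))"

primrec toalg :: "bool gt \<Rightarrow> alg" where
  "toalg (Ret b) = Done b"
| "toalg (GC f) = Coin (\<lambda>b. toalg (f b))"
| "toalg (GQ i s f) = Query i s (\<lambda>b. toalg (f b))"

definition pr1 :: "(nat \<Rightarrow> bool pmf) \<Rightarrow> (nat \<Rightarrow> bool pmf) \<Rightarrow> nat \<Rightarrow> bool \<Rightarrow> real" where
  "pr1 P Q i s = pmf (if s then P i else Q i) True"

primrec ev :: "(nat \<Rightarrow> bool pmf) \<Rightarrow> (nat \<Rightarrow> bool pmf) \<Rightarrow> 'a gt \<Rightarrow> ('a \<Rightarrow> real) \<Rightarrow> real" where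
  "ev P Q (Ret x) g = g x"
| "ev P Q (GC f) g = (ev P Q (f True) g + ev P Q (f False) g) / 2"
| "ev P Q (GQ i s f) g = pr1 P Q i s * ev P Q (f True) g + (1 - pr1 P Q i s) * ev P Q (f False) g"

lemma pr1_bounds: "0 \<le> pr1 P Q i s" "pr1 P Q i s \<le> 1"
  by (auto simp: pr1_def pmf_le_1)

lemma ns_toalg: "num_samples (toalg t) = ns t"
  by (induction t) auto

lemma ns_bind: "(\<And>x. ns (f x) \<le> B) \<Longrightarrow> ns (gbind t f) \<le> ns t + B"
proof (induction t)
  case (GC g)
  have "ns (gbind (g b) f) \<le> ns (g b) + B" for b using GC by auto
  then show ?case by (simp add: max_def) (metis add_le_mono1 le_trans nat_le_linear)
next
  case (GQ i s g)
  have "ns (gbind (g b) f) \<le> ns (g b) + B" for b using GQ by auto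
  then show ?case by (simp add: max_def) (metis add_le_mono1 le_trans nat_le_linear)
qed auto

lemma ev_bind: "ev P Q (gbind t f) g = ev P Q t (\<lambda>x. ev P Q (f x) g)"
  by (induction t) auto

lemma ev_add: "ev P Q t (\<lambda>x. g x + h x) = ev P Q t g + ev P Q t h"
  by (induction t) (auto simp: algebra_simps add_divide_distrib)

lemma ev_scale: "ev P Q t (\<lambda>x. c * g x) = c * ev P Q t g"
  by (induction t) (auto simp: algebra_simps)

lemma ev_const: "ev P Q t (\<lambda>x. c) = c"
  by (induction t) (auto simp: algebra_simps)

lemma ev_diff: "ev P Q t (\<lambda>x. g x - h x) = ev P Q t g - ev P Q t h"
  using ev_add[of P Q t g "\<lambda>x. -1 * h x"] ev_scale[of P Q t "-1" h] by simp

lemma ev_mono: "(\<And>x. g x \<le> h x) \<Longrightarrow> ev P Q t g \<le> ev P Q t h"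
proof (induction t)
  case (GQ i s f)
  have a: "ev P Q (f True) g \<le> ev P Q (f True) h" "ev P Q (f False) g \<le> ev P Q (f False) h"
    using GQ by auto
  show ?case using pr1_bounds[of P Q i s] a
    by (simp add: add_mono mult_left_mono)
qed (auto simp: add_mono divide_right_mono)

lemma bool_pmf_bern: "(N::bool pmf) = bernoulli_pmf (pmf N True)"
  proof (rule pmf_eqI)
  fix i :: bool show "pmf N i = pmf (bernoulli_pmf (pmf N True)) i"
    by (cases i) (auto simp: pmf_False_conv_True pmf_le_1)
qed

lemma exp_bool_pmf: "measure_pmf.expectation (N::bool pmf) f = f True * pmf N True + f False * (1 - pmf N True)"
  by (subst bool_pmf_bern) (simp add: integral_bernoulli_pmf pmf_le_1)

lemma bridge: "pmf (run P Q (toalg t)) True = ev P Q t of_bool"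
  by (induction t) (auto simp: pmf_bind exp_bool_pmf pr1_def algebra_simps)

lemma bridgeF: "pmf (run P Q (toalg t)) False = 1 - ev P Q t of_bool"
  by (simp add: pmf_False_conv_True bridge)



lemma ns_bind_Ret: "ns (gbind t (\<lambda>x. Ret (f x))) = ns t"
  by (induction t) auto

primrec diffsum :: "nat \<Rightarrow> nat \<Rightarrow> real gt" where
  "diffsum i 0 = Ret 0"
| "diffsum i (Suc n) = GQ i True (\<lambda>b. GQ i False (\<lambda>c.
      gbind (diffsum i n) (\<lambda>D. Ret (D + (of_bool b - of_bool c)))))"

lemma ns_diffsum: "ns (diffsum i n) = 2 * n"
  by (induction n) (auto simp: ns_bind_Ret)

lemma ev_lin: "ev P Q t (\<lambda>D. D + c) = ev P Q t (\<lambda>D. D) + c"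
  using ev_add[of P Q t "\<lambda>D. D" "\<lambda>_. c"] by (simp add: ev_const)

lemma ev_sq: "ev P Q t (\<lambda>D. (D + c)^2) = ev P Q t (\<lambda>D. D^2) + 2 * c * ev P Q t (\<lambda>D. D) + c^2"
proof -
  have "(\<lambda>D. (D + c)^2) = (\<lambda>D. (D^2 + (2*c) * D) + c^2)"
    by (auto simp: fun_eq_iff power2_eq_square algebra_simps)
  then show ?thesis by (simp add: ev_add ev_scale ev_const)
qed

context fixes P Q :: "nat \<Rightarrow> bool pmf" and i :: nat
begin

abbreviation "pp \<equiv> pr1 P Q i True"
abbreviation "qq \<equiv> pr1 P Q i False"

lemma ev_ds_Suc: "ev P Q (diffsum i (Suc n)) g =
   pp * (qq * ev P Q (diffsum i n) g + (1 - qq) * ev P Q (diffsum i n) (\<lambda>D. g (D + 1)))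
 + (1 - pp) * (qq * ev P Q (diffsum i n) (\<lambda>D. g (D + -1)) + (1 - qq) * ev P Q (diffsum i n) g)"
  by (simp add: ev_bind)

lemma ds_moments: "ev P Q (diffsum i n) (\<lambda>D. D) = n * (pp - qq) \<and>
   ev P Q (diffsum i n) (\<lambda>D. D^2) = n * (pp*(1-pp) + qq*(1-qq)) + (n * (pp - qq))^2"
proof (induction n)
  case 0 then show ?case by simp
next
  case (Suc n)
  have e1: "ev P Q (diffsum i n) (\<lambda>D. D + 1) = ev P Q (diffsum i n) (\<lambda>D. D) + 1"
    "ev P Q (diffsum i n) (\<lambda>D. D + -1) = ev P Q (diffsum i n) (\<lambda>D. D) + -1"
    by (rule ev_lin)+
  have e2: "ev P Q (diffsum i n) (\<lambda>D. (D + 1)^2) = ev P Q (diffsum i n) (\<lambda>D. D^2) + 2 * 1 * ev P Q (diffsum i n) (\<lambda>D. D) + 1^2"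
    "ev P Q (diffsum i n) (\<lambda>D. (D + -1)^2) = ev P Q (diffsum i n) (\<lambda>D. D^2) + 2 * (-1) * ev P Q (diffsum i n) (\<lambda>D. D) + (-1)^2"
    by (rule ev_sq)+
  show ?case
    apply (simp only: ev_ds_Suc e1 e2 Suc[THEN conjunct1] Suc[THEN conjunct2])
    apply (simp add: algebra_simps power2_eq_square)
    done
qed

lemma ds_var: "ev P Q (diffsum i n) (\<lambda>D. (D - n * (pp - qq))^2) = n * (pp*(1-pp) + qq*(1-qq))"
proof -
  have "ev P Q (diffsum i n) (\<lambda>D. (D + (- (n * (pp - qq))))^2) = n * (pp*(1-pp) + qq*(1-qq))"
    by (simp only: ev_sq ds_moments) (simp add: power2_eq_square algebra_simps)
  then show ?thesis by simp
qed

end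

lemma cheb: assumes "s > 0" "\<And>D. A D \<Longrightarrow> s \<le> (D - x)^2"
  shows "ev P Q t (\<lambda>D. of_bool (A D)) \<le> ev P Q t (\<lambda>D. (D - x)^2) / s"
proof -
  have "ev P Q t (\<lambda>D. of_bool (A D)) \<le> ev P Q t (\<lambda>D. (1/s) * (D - x)^2)"
    by (rule ev_mono) (use assms in \<open>auto simp: field_simps\<close>)
  also have "\<dots> = (1/s) * ev P Q t (\<lambda>D. (D - x)^2)" by (rule ev_scale)
  finally show ?thesis by simp
qed



definition subtest :: "nat \<Rightarrow> nat \<Rightarrow> real \<Rightarrow> bool gt" where
  "subtest i n d = gbind (diffsum i n) (\<lambda>D. Ret (real n ^ 2 * d \<le> 4 * D^2))"

lemma ns_subtest: "ns (subtest i n d) = 2 * n"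
  by (simp add: subtest_def ns_bind_Ret ns_diffsum)

lemma ev_not: "ev P Q t (\<lambda>b. of_bool (\<not> b)) = 1 - ev P Q t of_bool"
proof -
  have "(\<lambda>b. of_bool (\<not> b) :: real) = (\<lambda>b. 1 - of_bool b)" by (auto simp: fun_eq_iff)
  then show ?thesis by (simp add: ev_diff ev_const)
qed

lemma pq_var_le: "pr1 P Q i True * (1 - pr1 P Q i True) + pr1 P Q i False * (1 - pr1 P Q i False) \<le> 1/2"
proof -
  have "x * (1 - x) \<le> 1/4" for x :: real
  proof -
    have "1/4 - x*(1-x) = (x - 1/2)^2" by (simp add: power2_eq_square algebra_simps)
    then show ?thesis using zero_le_power2[of "x - 1/2"] by linarith
  qed
  from this[of "pr1 P Q i True"] this[of "pr1 P Q i False"] show ?thesis by linarith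
qed

lemma st_null: assumes "P i = Q i" "n > 0" "d > 0"
  shows "ev P Q (subtest i n d) of_bool \<le> 2 / (n * d)"
proof -
  have eq: "pr1 P Q i True = pr1 P Q i False" using assms by (simp add: pr1_def)
  have s: "real n ^ 2 * d / 4 > 0" using assms by simp
  have "ev P Q (subtest i n d) of_bool = ev P Q (diffsum i n) (\<lambda>D. of_bool (real n ^ 2 * d \<le> 4 * D^2))"
    by (simp add: subtest_def ev_bind)
  also have "\<dots> \<le> ev P Q (diffsum i n) (\<lambda>D. (D - n * (pr1 P Q i True - pr1 P Q i False))^2) / (real n ^ 2 * d / 4)"
    by (rule cheb[OF s]) (simp add: eq)
  also have "\<dots> \<le> (n * (1/2)) / (real n ^ 2 * d / 4)"
    unfolding ds_var using pq_var_le[of P Q i] assms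
    by (intro divide_right_mono mult_left_mono) auto
  also have "\<dots> = 2 / (n * d)" using assms by (simp add: power2_eq_square field_simps)
  finally show ?thesis .
qed

lemma key_ineq: fixes D y T :: real assumes "4 * D^2 < T" "T \<le> y^2"
  shows "T / 4 \<le> (D - y)^2"
proof -
  have "(2 * D)^2 < y^2" using assms by (simp add: power_mult_distrib)
  then have "\<bar>2 * D\<bar> < \<bar>y\<bar>" by (metis abs_ge_zero power2_abs power_less_imp_less_base) 
  then have "\<bar>y\<bar> / 2 \<le> \<bar>D - y\<bar>" by linarith
  then have "(\<bar>y\<bar> / 2)^2 \<le> \<bar>D - y\<bar>^2" by (rule power_mono) simp
  then show ?thesis using assms by (simp add: power_divide)
qed

lemma st_alt: assumes "d \<le> (pr1 P Q i True - pr1 P Q i False)^2" "n > 0" "d > 0"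
  shows "ev P Q (subtest i n d) of_bool \<ge> 1 - 2 / (n * d)"
proof -
  let ?y = "n * (pr1 P Q i True - pr1 P Q i False)"
  have s: "real n ^ 2 * d / 4 > 0" using assms by simp
  have "ev P Q (subtest i n d) (\<lambda>b. of_bool (\<not> b)) = ev P Q (diffsum i n) (\<lambda>D. of_bool (\<not> real n ^ 2 * d \<le> 4 * D^2))"
    by (simp add: subtest_def ev_bind)
  also have "\<dots> \<le> ev P Q (diffsum i n) (\<lambda>D. (D - ?y)^2) / (real n ^ 2 * d / 4)"
  proof (rule cheb[OF s])
    fix D assume "\<not> real n ^ 2 * d \<le> 4 * D^2"
    moreover have "real n ^ 2 * d \<le> ?y^2" using assms by (simp add: power_mult_distrib)
    ultimately show "real n ^ 2 * d / 4 \<le> (D - ?y)^2" by (intro key_ineq) auto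
  qed
  also have "\<dots> \<le> (n * (1/2)) / (real n ^ 2 * d / 4)"
    unfolding ds_var using pq_var_le[of P Q i] assms
    by (intro divide_right_mono mult_left_mono) auto
  also have "\<dots> = 2 / (n * d)" using assms by (simp add: power2_eq_square field_simps)
  finally show ?thesis by (simp add: ev_not)
qed

primrec andr :: "nat \<Rightarrow> bool gt \<Rightarrow> bool gt" where
  "andr 0 t = Ret True"
| "andr (Suc r) t = gbind t (\<lambda>b. if b then andr r t else Ret False)"

lemma ev_andr: "ev P Q (andr r t) of_bool = (ev P Q t of_bool) ^ r"
proof (induction r)
  case (Suc r)
  have "(\<lambda>b. ev P Q (if b then andr r t else Ret False) of_bool) = (\<lambda>b. ev P Q (andr r t) of_bool * of_bool b)"
    by (auto simp: fun_eq_iff)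
  then show ?case by (simp add: ev_bind ev_scale Suc)
qed simp

lemma ns_andr: "ns (andr r t) \<le> r * ns t"
proof (induction r)
  case (Suc r)
  have "ns (gbind t (\<lambda>b. if b then andr r t else Ret False)) \<le> ns t + r * ns t"
    by (rule ns_bind) (use Suc in auto)
  then show ?case by simp
qed simp

definition itest :: "nat \<Rightarrow> nat \<Rightarrow> nat \<Rightarrow> real \<Rightarrow> bool gt" where
  "itest r n i d = andr r (subtest i n d)"

lemma ns_itest: "ns (itest r n i d) \<le> 2 * r * n"
  using ns_andr[of r "subtest i n d"] by (simp add: itest_def ns_subtest)

lemma ev_nonneg: "(\<And>x. 0 \<le> g x) \<Longrightarrow> 0 \<le> ev P Q t g"
  using ev_mono[of "\<lambda>_. 0" g P Q t] by (simp add: ev_const)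

lemma ev_le1: "(\<And>x. g x \<le> 1) \<Longrightarrow> ev P Q t g \<le> 1"
  using ev_mono[of g "\<lambda>_. 1" P Q t] by (simp add: ev_const)

lemma it_null: assumes "P i = Q i" "d > (0::real)" "r \<ge> 1" "8 * real r \<le> real n * d"
  shows "ev P Q (itest r n i d) of_bool \<le> (1/4) ^ r"
proof -
  have n: "n > 0" using assms by (cases n) auto
  have "2 / (n * d) \<le> 1/4" using assms n by (simp add: field_simps)
  then have "ev P Q (subtest i n d) of_bool \<le> 1/4" using st_null[where P=P and Q=Q and i=i and n=n and d=d, OF assms(1) n assms(2)] by linarith
  then show ?thesis unfolding itest_def ev_andr
    by (intro power_mono) (auto intro: ev_nonneg)
qed

lemma it_alt: assumes "d \<le> (pr1 P Q i True - pr1 P Q i False)^2" "d > (0::real)" "r \<ge> 1" "8 * real r \<le> real n * d"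
  shows "ev P Q (itest r n i d) of_bool \<ge> 3/4"
proof -
  have n: "n > 0" using assms by (cases n) auto
  have x: "2 / (n * d) \<le> 1 / (4 * r)" using assms n by (simp add: field_simps)
  have x1: "1 / (4 * real r) \<le> 1" using assms by simp
  have "ev P Q (subtest i n d) of_bool \<ge> 1 - 1 / (4 * r)" using st_alt[where P=P and Q=Q and i=i and n=n and d=d, OF assms(1) n assms(2)] x by linarith
  then have "(1 + (- 1 / (4 * r))) ^ r \<le> ev P Q (itest r n i d) of_bool" unfolding itest_def ev_andr
    by (intro power_mono) (use x1 in auto)
  moreover have "1 + real r * (- 1 / (4 * r)) \<le> (1 + (- 1 / (4 * r))) ^ r"
    by (rule Bernoulli_inequality) (use x1 in auto)
  moreover have "1 + real r * (- 1 / (4 * r)) = 3/4" using assms by simp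
  ultimately show ?thesis by linarith
qed



primrec bits :: "nat \<Rightarrow> nat gt" where
  "bits 0 = Ret 0"
| "bits (Suc k) = GC (\<lambda>b. gbind (bits k) (\<lambda>x. Ret (2 * x + of_bool b)))"

lemma ns_bits: "ns (bits k) = 0"
  by (induction k) (auto simp: ns_bind_Ret)

lemma ev_bits: "ev P Q (bits k) h = (\<Sum>x<2^k. h x) / 2^k"
proof (induction k arbitrary: h)
  case (Suc k)
  have "(\<Sum>x<2^Suc k. h x) = (\<Sum>i<2 * 2^k. if even i then h i else h i)" by simp
  also have "\<dots> = (\<Sum>x<2^k. h (2*x)) + (\<Sum>x<2^k. h (2*x+1))" by (rule sum_split_even_odd)
  finally show ?case by (simp add: ev_bind Suc field_simps)
qed simp

definition idx :: "nat \<Rightarrow> nat \<Rightarrow> nat gt" where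
  "idx m k = gbind (bits k) (\<lambda>x. Ret (x mod m + 1))"

lemma ns_idx: "ns (idx m k) = 0" by (simp add: idx_def ns_bind_Ret ns_bits)

lemma ev_idx: "ev P Q (idx m k) h = (\<Sum>x<2^k. h (x mod m + 1)) / 2^k"
  by (simp add: idx_def ev_bind ev_bits)

lemma sum_mod_lower: assumes "m \<ge> 1" "\<And>x. 0 \<le> h x"
  shows "(\<Sum>x<N. h (x mod m + 1)) \<ge> real (N div m) * (\<Sum>i=1..m. h i)"
proof -
  have "(\<Sum>x<(N div m) * m. h (x mod m + 1)) = (\<Sum>i<N div m. \<Sum>j<m. h ((j + i*m) mod m + 1))"
    by (rule sum_mult_product)
  also have "\<dots> = (\<Sum>i<N div m. \<Sum>j<m. h (j + 1))" by simp
  also have "\<dots> = real (N div m) * (\<Sum>i=1..m. h i)"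
  proof -
    have "(\<Sum>j<m. h (j+1)) = (\<Sum>i=1..m. h i)" by (induction m) auto
    then show ?thesis by simp
  qed
  finally have e: "(\<Sum>x<(N div m) * m. h (x mod m + 1)) = real (N div m) * (\<Sum>i=1..m. h i)" .
  have "(\<Sum>x<(N div m) * m. h (x mod m + 1)) \<le> (\<Sum>x<N. h (x mod m + 1))"
    by (rule sum_mono2) (auto simp: assms(2) intro: order.strict_trans2[OF _ div_times_less_eq_dividend])
  then show ?thesis using e by simp
qed

lemma aux_nat: "(N::nat) < (q + 1) * m \<Longrightarrow> 1 \<le> q \<Longrightarrow> N \<le> 2 * q * m"
proof -
  assume a: "N < (q + 1) * m" "1 \<le> q"
  have "m * 1 \<le> m * q" using a(2) by (rule mult_le_mono2)
  then have "m \<le> q * m" by (simp add: mult.commute)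
  moreover have "N < q * m + m" using a(1) by (simp add: algebra_simps)
  ultimately have "N \<le> q * m + q * m" by linarith
  then show ?thesis by (simp add: algebra_simps)
qed

lemma ev_idx_lower: assumes "m \<ge> 1" "m \<le> 2^k" "\<And>x. 0 \<le> h x"
  shows "ev P Q (idx m k) h \<ge> (\<Sum>i=1..m. h i) / (2 * m)"
proof -
  let ?N = "2^k :: nat"
  have "0 < ?N div m" using assms by (subst div_greater_zero_iff) auto
  then have q: "?N div m \<ge> 1" by simp
  have "?N < (?N div m + 1) * m" using assms(1)
    by (metis add.commute div_mult_mod_eq mod_less_divisor mult.commute mult_Suc_right nat_add_left_cancel_less less_le_trans le_refl plus_1_eq_Suc linorder_not_le add_less_cancel_left zero_less_one)
  then have "?N \<le> 2 * (?N div m) * m" using q by (rule aux_nat)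
  then have N2: "real ?N \<le> 2 * real (?N div m) * m" by (metis of_nat_le_iff of_nat_mult of_nat_numeral)
  have S: "0 \<le> (\<Sum>i=1..m. h i)" using assms by (simp add: sum_nonneg)
  have "(\<Sum>i=1..m. h i) / (2 * m) \<le> real (?N div m) * (\<Sum>i=1..m. h i) / ?N"
  proof -
    have "(\<Sum>i=1..m. h i) * real ?N \<le> (\<Sum>i=1..m. h i) * (2 * real (?N div m) * m)"
      using N2 S by (rule mult_left_mono)
    then show ?thesis using assms by (simp add: field_simps)
  qed
  also have "\<dots> \<le> (\<Sum>x<?N. h (x mod m + 1)) / ?N"
    by (rule divide_right_mono[OF sum_mod_lower[OF assms(1,3)]]) simp
  finally show ?thesis by (simp add: ev_idx)
qed

lemma ev_idx_upper: assumes "m \<ge> 1" "\<And>i. i \<in> {1..m} \<Longrightarrow> h i \<le> B"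
  shows "ev P Q (idx m k) h \<le> B"
proof -
  have "(\<Sum>x<(2::nat)^k. h (x mod m + 1)) \<le> (\<Sum>x<(2::nat)^k. B)"
    by (rule sum_mono) (use assms in \<open>auto intro!: assms(2) Suc_leI mod_less_divisor\<close>)
  then show ?thesis by (simp add: ev_idx field_simps)
qed

definition notg :: "bool gt \<Rightarrow> bool gt" where
  "notg t = gbind t (\<lambda>b. Ret (\<not> b))"

lemma ev_notg: "ev P Q (notg t) of_bool = 1 - ev P Q t of_bool"
  by (simp add: notg_def ev_bind ev_not)

lemma ns_notg: "ns (notg t) = ns t" by (simp add: notg_def ns_bind_Ret)

definition andt :: "bool gt \<Rightarrow> bool gt \<Rightarrow> bool gt" where
  "andt a b = gbind a (\<lambda>x. if x then b else Ret False)"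

lemma ev_andt: "ev P Q (andt a b) of_bool = ev P Q a of_bool * ev P Q b of_bool"
proof -
  have "ev P Q (andt a b) of_bool = ev P Q a (\<lambda>x. ev P Q (if x then b else Ret False) of_bool)"
    by (simp add: andt_def ev_bind)
  also have "(\<lambda>x. ev P Q (if x then b else Ret False) of_bool) = (\<lambda>x. ev P Q b of_bool * of_bool x)"
    by (auto simp: fun_eq_iff)
  also have "ev P Q a (\<lambda>x. ev P Q b of_bool * of_bool x) = ev P Q b of_bool * ev P Q a of_bool"
    by (rule ev_scale)
  finally show ?thesis by simp
qed

lemma ns_andt: "ns (andt a b) \<le> ns a + ns b"
  unfolding andt_def by (rule ns_bind) auto

primrec allv :: "nat \<Rightarrow> (nat \<Rightarrow> bool gt) \<Rightarrow> bool gt" where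
  "allv 0 f = Ret True"
| "allv (Suc L) f = andt (f L) (allv L f)"

lemma ev_allv: "ev P Q (allv L f) of_bool = (\<Prod>k<L. ev P Q (f k) of_bool)"
  by (induction L) (auto simp: ev_andt)

lemma ns_allv: "ns (allv L f) \<le> (\<Sum>k<L. ns (f k))"
proof (induction L)
  case (Suc L)
  then show ?case using ns_andt[of "f L" "allv L f"] by simp
qed simp

definition rnd :: "nat \<Rightarrow> nat \<Rightarrow> nat \<Rightarrow> nat \<Rightarrow> real \<Rightarrow> bool gt" where
  "rnd r n m k d = gbind (idx m k) (\<lambda>i. itest r n i d)"

lemma ns_rnd: "ns (rnd r n m k d) \<le> 2 * r * n"
  using ns_bind[of "\<lambda>i. itest r n i d" "2*r*n" "idx m k"] ns_itest by (simp add: rnd_def ns_idx)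

lemma ev01: "0 \<le> ev P Q t of_bool" "ev P Q t of_bool \<le> 1"
  by (auto intro: ev_nonneg ev_le1)

lemma rnd_null: assumes "\<forall>i\<in>{1..m}. P i = Q i" "m \<ge> 1" "d > 0" "r \<ge> 1" "8 * real r \<le> real n * d"
  shows "ev P Q (rnd r n m k d) of_bool \<le> (1/4)^r"
  unfolding rnd_def ev_bind using assms
  by (intro ev_idx_upper it_null) auto

lemma rnd_alt: assumes "m \<ge> 1" "m \<le> 2^k" "d > 0" "r \<ge> 1" "8 * real r \<le> real n * d"
  shows "ev P Q (rnd r n m k d) of_bool \<ge> 3/4 * card {i\<in>{1..m}. d \<le> (pr1 P Q i True - pr1 P Q i False)^2} / (2 * m)"
proof -
  let ?G = "{i\<in>{1..m}. d \<le> (pr1 P Q i True - pr1 P Q i False)^2}"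
  have "3/4 * card ?G = (\<Sum>i\<in>?G. 3/4)" by simp
  also have "\<dots> \<le> (\<Sum>i\<in>?G. ev P Q (itest r n i d) of_bool)"
  proof (rule sum_mono)
    fix i assume "i \<in> ?G"
    then show "3/4 \<le> ev P Q (itest r n i d) of_bool" using assms by (intro it_alt) auto
  qed
  also have "\<dots> \<le> (\<Sum>i=1..m. ev P Q (itest r n i d) of_bool)"
    by (rule sum_mono2) (auto intro: ev01)
  finally have "3/4 * card ?G / (2*m) \<le> (\<Sum>i=1..m. ev P Q (itest r n i d) of_bool) / (2*m)"
    by (rule divide_right_mono) simp
  also have "\<dots> \<le> ev P Q (rnd r n m k d) of_bool"
    unfolding rnd_def ev_bind using assms by (intro ev_idx_lower) (auto intro: ev01)
  finally show ?thesis by simp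
qed

lemma prod_ge: "finite S \<Longrightarrow> (\<And>k. k \<in> S \<Longrightarrow> 0 \<le> x k \<and> x k \<le> (1::real)) \<Longrightarrow> (\<Prod>k\<in>S. x k) \<ge> 1 - (\<Sum>k\<in>S. 1 - x k)"
proof (induction S rule: finite_induct)
  case (insert a S)
  have p: "0 \<le> (\<Prod>k\<in>S. x k)" "(\<Prod>k\<in>S. x k) \<le> 1" using insert by (auto intro: prod_nonneg prod_le_1)
  have "1 - (1 - x a) - (\<Sum>k\<in>S. 1 - x k) \<le> x a * (\<Prod>k\<in>S. x k)"
  proof -
    have "x a * (1 - (\<Sum>k\<in>S. 1 - x k)) \<le> x a * (\<Prod>k\<in>S. x k)" using insert by (intro mult_left_mono) auto
    moreover have "(1 - x a) * (\<Sum>k\<in>S. 1 - x k) \<ge> 0" using insert by (intro mult_nonneg_nonneg sum_nonneg) auto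
    ultimately show ?thesis by (simp add: algebra_simps)
  qed
  then show ?case using insert by simp
qed simp

lemma prod_le_factor: "finite S \<Longrightarrow> j \<in> S \<Longrightarrow> (\<And>k. k \<in> S \<Longrightarrow> 0 \<le> x k \<and> x k \<le> (1::real)) \<Longrightarrow> (\<Prod>k\<in>S. x k) \<le> x j"
proof -
  assume a: "finite S" "j \<in> S" "\<And>k. k \<in> S \<Longrightarrow> 0 \<le> x k \<and> x k \<le> (1::real)"
  have "(\<Prod>k\<in>S. x k) = x j * (\<Prod>k\<in>S-{j}. x k)" using a by (simp add: prod.remove)
  also have "\<dots> \<le> x j * 1" using a by (intro mult_left_mono prod_le_1) auto
  finally show ?thesis by simp
qed

lemma pow_le_recip: assumes "0 \<le> x" "x \<le> (1::real)" shows "(1 - x)^K \<le> 1 / (1 + K * x)"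
proof -
  have "(1 - x)^K * (1 + x)^K = (1 - x^2)^K" by (simp add: power_mult_distrib[symmetric] power2_eq_square algebra_simps)
  also have "\<dots> \<le> 1" using assms by (intro power_le_one) (auto simp: power_le_one)
  finally have a: "(1 - x)^K * (1 + x)^K \<le> 1" .
  have b: "1 + K * x \<le> (1 + x)^K" using assms by (intro Bernoulli_inequality) auto
  have c: "0 \<le> (1 - x)^K" using assms by simp
  have "(1 - x)^K * (1 + K * x) \<le> (1 - x)^K * (1 + x)^K" using b c by (rule mult_left_mono)
  then have "(1 - x)^K * (1 + K * x) \<le> 1" using a by linarith
  moreover have "1 + K * x > 0" using assms by (simp add: add_pos_nonneg)
  ultimately show ?thesis by (simp add: field_simps)
qed



definition dd :: "nat \<Rightarrow> real \<Rightarrow> nat \<Rightarrow> real" where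
  "dd m a k = m * a / 2^k"

lemma dd_Suc: "dd m a (Suc k) = dd m a k / 2" by (simp add: dd_def field_simps)

lemma pointwise: assumes "0 \<le> y" "y \<le> 1" "a > 0" "m \<ge> 1"
  shows "y \<le> dd m a L + of_bool (dd m a 0 \<le> y) + (\<Sum>k\<in>{1..L}. of_bool (dd m a k \<le> y) * (2 * min 1 (dd m a k)))"
proof -
  have S0: "0 \<le> (\<Sum>k\<in>{1..L}. of_bool (dd m a k \<le> y) * (2 * min 1 (dd m a k)))"
    using assms by (intro sum_nonneg) (auto simp: dd_def)
  have dpos: "dd m a k > 0" for k using assms by (simp add: dd_def)
  show ?thesis
  proof (cases "y < dd m a L")
    case True then show ?thesis using S0 by simp
  next
    case False
    show ?thesis
    proof (cases "dd m a 0 \<le> y")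
      case True then show ?thesis using S0 assms dpos[of L] by simp
    next
      case F0: False
      define k where "k = (LEAST k. dd m a k \<le> y)"
      have ex: "dd m a L \<le> y" using False by simp
      have kL: "k \<le> L" unfolding k_def by (rule Least_le) (rule ex)
      have dk: "dd m a k \<le> y" unfolding k_def by (rule LeastI) (rule ex)
      have k0: "k \<noteq> 0" using dk F0 by (cases k) auto
      then obtain j where j: "k = Suc j" by (cases k) auto
      have "\<not> dd m a j \<le> y" unfolding k_def using j k_def not_less_Least[of j "\<lambda>k. dd m a k \<le> y"] by simp
      then have "y \<le> 2 * dd m a k" using j by (simp add: dd_Suc)
      then have "y \<le> 2 * min 1 (dd m a k)" using assms by simp
      also have "\<dots> = of_bool (dd m a k \<le> y) * (2 * min 1 (dd m a k))" using dk by simp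
      also have "\<dots> \<le> (\<Sum>k\<in>{1..L}. of_bool (dd m a k \<le> y) * (2 * min 1 (dd m a k)))"
        by (rule member_le_sum) (use kL k0 assms in \<open>auto simp: dd_def\<close>)
      finally show ?thesis using dpos[of L] by simp
    qed
  qed
qed

lemma card_sum: "(\<Sum>i\<in>S. of_bool (A i) * c) = real (card {i\<in>S. A i}) * (c::real)" if "finite S"
proof -
  have "(\<Sum>i\<in>S. of_bool (A i) * c) = (\<Sum>i\<in>S. if A i then c else 0)" by (rule sum.cong) auto
  also have "\<dots> = (\<Sum>i\<in>{i\<in>S. A i}. c)"
    using sum.inter_filter[OF that, of "\<lambda>_. c" A] by simp
  finally show ?thesis by simp
qed

lemma real_ge1: "real (n::nat) \<noteq> 0 \<Longrightarrow> 1 \<le> real n" by simp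

lemma comb:
  fixes x :: "nat \<Rightarrow> real"
  assumes m: "m \<ge> 1" and a: "a > 0" and L: "2 * m < (2::nat)^L"
    and x: "\<And>i. i \<in> {1..m} \<Longrightarrow> 0 \<le> x i \<and> x i \<le> 1"
    and S: "(\<Sum>i=1..m. x i) > m * a"
  shows "\<exists>k\<le>L. 6 * m \<le> real (card {i\<in>{1..m}. dd m a k \<le> x i}) * min (6 * m) (24 * (L+1) * min 1 (dd m a k) / a)"
proof (rule ccontr)
  define G where "G k = real (card {i\<in>{1..m}. dd m a k \<le> x i})" for k
  define B where "B = m * a / (4 * (real L+1))"
  assume "\<not> ?thesis"
  then have H: "\<And>k. k \<le> L \<Longrightarrow> G k * min (6 * real m) (24 * (real L+1) * min 1 (dd m a k) / a) < 6 * real m"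
    unfolding G_def by force
  have Bpos: "B > 0" using m a by (simp add: B_def)
  have C1: "G k * min 1 (dd m a k) < B" if "k \<le> L" for k
  proof (cases "G k = 0")
    case True then show ?thesis using Bpos by simp
  next
    case False
    then have G1: "G k \<ge> 1" unfolding G_def by (rule real_ge1)
    have h: "G k * min (6 * real m) (24 * (real L+1) * min 1 (dd m a k) / a) < 6 * real m" using H that by blast
    show ?thesis
    proof (cases "6 * real m \<le> 24 * (real L+1) * min 1 (dd m a k) / a")
      case True
      then have "G k * (6 * real m) < 6 * real m" using h by (simp add: min_def)
      moreover have "1 * (6 * real m) \<le> G k * (6 * real m)" using G1 by (intro mult_right_mono) auto
      ultimately show ?thesis by simp
    next
      case False
      then have "G k * (24 * (real L+1) * min 1 (dd m a k) / a) < 6 * real m" using h by (simp add: min_def)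
      then have "G k * min 1 (dd m a k) * (24 * (real L+1)) < 6 * real m * a" using a by (simp add: field_simps)
      then show ?thesis unfolding B_def by (simp add: field_simps)
    qed
  qed
  have C0: "G 0 < B"
  proof (cases "G 0 = 0")
    case True then show ?thesis using Bpos by simp
  next
    case False
    then have G1: "G 0 \<ge> 1" unfolding G_def by (rule real_ge1)
    have c: "G 0 * min 1 (dd m a 0) < B" using C1 by simp
    show ?thesis
    proof (cases "dd m a 0 \<ge> 1")
      case True then show ?thesis using c by simp
    next
      case False
      then have "G 0 * (m * a) < B" using c by (simp add: dd_def)
      moreover have "B \<le> m * a" using m a unfolding B_def by (simp add: field_simps)
      moreover have "m * a \<le> G 0 * (m * a)" using G1 m a by simp
      ultimately show ?thesis by linarith
    qed
  qed
  have dL: "dd m a L \<le> a / 2"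
  proof -
    have "real (2 * m) \<le> 2 ^ L" using L by (metis less_imp_le of_nat_le_iff of_nat_numeral of_nat_power)
    then have "m * a * 2 \<le> a * 2 ^ L" using a by (simp add: field_simps)
    then show ?thesis unfolding dd_def by (simp add: field_simps)
  qed
  have "(\<Sum>i=1..m. x i) \<le> (\<Sum>i=1..m. dd m a L + of_bool (dd m a 0 \<le> x i) + (\<Sum>k\<in>{1..L}. of_bool (dd m a k \<le> x i) * (2 * min 1 (dd m a k))))"
  proof (rule sum_mono)
    fix i assume "i \<in> {1..m}"
    then show "x i \<le> dd m a L + of_bool (dd m a 0 \<le> x i) + (\<Sum>k\<in>{1..L}. of_bool (dd m a k \<le> x i) * (2 * min 1 (dd m a k)))"
      using x[of i] a m by (intro pointwise) auto
  qed
  also have "\<dots> = m * dd m a L + G 0 + (\<Sum>k\<in>{1..L}. G k * (2 * min 1 (dd m a k)))"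
  proof -
    have a1: "(\<Sum>i=1..m. of_bool (dd m a 0 \<le> x i) :: real) = G 0"
      using card_sum[of "{1..m}" "\<lambda>i. dd m a 0 \<le> x i" 1] unfolding G_def by simp
    have a2: "(\<Sum>i=1..m. \<Sum>k\<in>{1..L}. of_bool (dd m a k \<le> x i) * (2 * min 1 (dd m a k)))
        = (\<Sum>k\<in>{1..L}. \<Sum>i=1..m. of_bool (dd m a k \<le> x i) * (2 * min 1 (dd m a k)))"
      by (rule sum.swap)
    also have "\<dots> = (\<Sum>k\<in>{1..L}. G k * (2 * min 1 (dd m a k)))"
      unfolding G_def by (intro sum.cong refl card_sum) simp
    finally show ?thesis using a1 by (simp add: sum.distrib)
  qed
  also have "\<dots> \<le> m * (a/2) + G 0 + (\<Sum>k\<in>{1..L}. 2 * B)"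
  proof -
    have "(\<Sum>k\<in>{1..L}. G k * (2 * min 1 (dd m a k))) \<le> (\<Sum>k\<in>{1..L}. 2 * B)"
      by (rule sum_mono) (use C1 in \<open>fastforce\<close>)
    moreover have "m * dd m a L \<le> m * (a/2)" using dL by (intro mult_left_mono) auto
    ultimately show ?thesis by linarith
  qed
  also have "\<dots> < m * (a/2) + B + 2 * L * B" using C0 by simp
  also have "\<dots> \<le> m * a"
  proof -
    have "B + 2 * L * B = B * (1 + 2 * L)" by (simp add: algebra_simps)
    also have "\<dots> = m * a * (1 + 2 * L) / (4 * (L+1))" unfolding B_def by simp
    finally have "B + 2 * L * B = m * a * (1 + 2 * L) / (4 * (L+1))" .
    also have "\<dots> \<le> m * a * (2 * (L+1)) / (4 * (L+1))"
      using m a by (intro divide_right_mono mult_left_mono) auto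
    also have "\<dots> = m * a / 2" by (simp add: field_simps)
    finally show ?thesis by simp
  qed
  finally show False using S by simp
qed



lemma ln_NL: assumes "m \<ge> 1" "(2::nat)^L \<le> 4 * m" shows "real L + 1 \<le> 3 * (1 + ln (real m))"
proof -
  have "real ((2::nat)^L) \<le> real (4 * m)" using assms(2) by (simp only: of_nat_le_iff)
  then have "(2::real)^L \<le> 4 * real m" by simp
  then have "ln ((2::real)^L) \<le> ln (4 * real m)" using assms by (intro ln_mono) auto
  then have "L * ln 2 \<le> ln 4 + ln (real m)" using assms by (simp add: ln_realpow ln_mult)
  moreover have "ln (4::real) = 2 * ln 2" using ln_realpow[of 2 2] by simp
  ultimately have "L * ln 2 \<le> 2 * ln 2 + ln (real m)" by simp
  moreover have l2: "ln (2::real) \<ge> 2/3" by (rule ln2_ge_two_thirds)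
  moreover have lm: "ln (real m) \<ge> 0" using assms by simp
  moreover have "ln (real m) * 1 \<le> ln (real m) * (3/2 * ln 2)" using lm l2 by (intro mult_left_mono) auto
  ultimately have "L * ln 2 \<le> (2 + 3/2 * ln (real m)) * ln 2"
    by (simp add: algebra_simps)
  then have "L \<le> 2 + 3/2 * ln (real m)" using l2 by (simp add: mult_le_cancel_right)
  then show ?thesis using lm by (simp add: algebra_simps)
qed

lemma ln_r: assumes "m \<ge> 1" "real NL \<le> 3 * (1 + ln (real m))" "(4::nat)^r0 \<le> 21 * m * NL"
  shows "real r0 + 1 \<le> 4 * (1 + ln (real m))"
proof -
  have lm: "ln (real m) \<ge> 0" using assms by simp
  have "ln (real m) \<le> real m - 1" using assms by (intro ln_le_minus_one) auto
  then have "3 * (1 + ln (real m)) \<le> 3 * real m" by (simp add: algebra_simps)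
  then have "real NL \<le> 3 * real m" using assms(2) by linarith
  have "real ((4::nat)^r0) \<le> real (21 * m * NL)" using assms(3) by (simp only: of_nat_le_iff)
  then have "(4::real)^r0 \<le> 21 * real m * real NL" by simp
  also have "\<dots> \<le> 21 * real m * (3 * real m)" using \<open>real NL \<le> 3 * real m\<close> assms by (intro mult_left_mono) auto
  also have "\<dots> \<le> 4^3 * (real m)^2" by (simp add: power2_eq_square)
  finally have "ln ((4::real)^r0) \<le> ln (4^3 * (real m)^2)" using assms by (intro ln_mono) auto
  moreover have "ln (64::real) = 3 * ln 4" using ln_realpow[of 4 3] by simp
  ultimately have "r0 * ln 4 \<le> 3 * ln 4 + 2 * ln (real m)" using assms by (simp add: ln_realpow ln_mult)
  moreover have l4: "ln (4::real) \<ge> 4/3" using ln_realpow[of 2 2] ln2_ge_two_thirds by simp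
  moreover have "2 * ln (real m) * 1 \<le> 2 * ln (real m) * (3/4 * ln 4)" using lm l4 by (intro mult_left_mono) auto
  ultimately have "r0 * ln 4 \<le> (3 + 3/2 * ln (real m)) * ln 4"
    by (simp add: algebra_simps)
  then have "r0 \<le> 3 + 3/2 * ln (real m)" using l4 by (simp add: mult_le_cancel_right)
  then show ?thesis using lm by (simp add: algebra_simps)
qed



lemma nat_ceil_up: "0 \<le> y \<Longrightarrow> real (nat \<lceil>y\<rceil>) \<le> y + 1"
proof -
  assume "0 \<le> y"
  then have "real (nat \<lceil>y\<rceil>) = of_int \<lceil>y\<rceil>" by simp
  also have "\<dots> \<le> y + 1" by (simp add: of_int_ceiling_le_add_one)
  finally show ?thesis .
qed

lemma ev_lv: "ev P Q (andr K (notg x)) of_bool = (1 - ev P Q x of_bool) ^ K"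
  by (simp add: ev_andr ev_notg)

lemma ns_lv: "ns (andr K (notg x)) \<le> K * ns x"
  using ns_andr[of K "notg x"] by (simp add: ns_notg)

lemma poly_id: "498 * (3 * y)^2 * (4 * y)^2 = 71712 * (y::real)^4"
  by algebra

lemma core:
  assumes m: "m \<ge> 1" and a: "0 < a" "a < 1"
  shows "\<exists>t. real (ns t) \<le> 72000 * (1 + ln (real m))^4 / a \<and>
    (\<forall>P Q. (\<forall>i\<in>{1..m}. P i = Q i) \<longrightarrow> ev P Q t of_bool \<ge> 2/3) \<and>
    (\<forall>P Q. (\<Sum>i=1..m. (pr1 P Q i True - pr1 P Q i False)^2) > m * a \<longrightarrow> ev P Q t of_bool \<le> 1/3)"
proof -
  obtain L0 where L0: "2^L0 \<le> 2*m" "2*m < (2::nat)^(L0+1)" using ex_power_ivl1[of 2 "2*m"] m by auto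
  define L where "L = L0 + 1"
  have L1: "2*m < (2::nat)^L" using L0 L_def by simp
  have L2: "(2::nat)^L \<le> 4*m" using L0 L_def by simp
  have mL: "m \<le> 2^L" using L1 by simp
  define NL where "NL = L + 1"
  have "1 \<le> 21*m*NL" using m NL_def by simp
  then obtain r0 where r0: "4^r0 \<le> 21*m*NL" "21*m*NL < (4::nat)^(r0+1)" using ex_power_ivl1[of 4 "21*m*NL"] by auto
  define r where "r = r0 + 1"
  have r1: "r \<ge> 1" by (simp add: r_def)
  define d where "d k = dd m a k" for k
  define Kr where "Kr k = min (6 * real m) (24 * (real L + 1) * min 1 (d k) / a)" for k
  define K where "K k = nat \<lceil>Kr k\<rceil>" for k
  define nn where "nn k = nat \<lceil>8 * real r / d k\<rceil>" for k
  define rd where "rd k = rnd r (nn k) m L (d k)" for k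
  define lv where "lv k = andr (K k) (notg (rd k))" for k
  define t where "t = allv NL lv"
  have dpos: "d k > 0" for k using m a by (simp add: d_def dd_def)
  have dlow: "a / 4 \<le> d k" if "k \<le> L" for k
  proof -
    have "(2::real)^k \<le> 2^L" using that by (simp add: power_increasing)
    also have "\<dots> \<le> 4 * real m" using L2 by (metis of_nat_le_iff of_nat_mult of_nat_numeral of_nat_power)
    finally have "(2::real)^k \<le> 4 * real m" .
    then have "a * 2^k \<le> a * (4 * real m)" using a by (intro mult_left_mono) auto
    then show ?thesis unfolding d_def dd_def using a by (simp add: field_simps)
  qed
  have nnd: "8 * real r \<le> real (nn k) * d k" for k
  proof -
    have "8 * real r / d k \<le> real (nn k)" unfolding nn_def by (rule real_nat_ceiling_ge)
    then show ?thesis using dpos[of k] by (simp add: field_simps)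
  qed
  have Kr0: "0 \<le> Kr k" for k using m a dpos[of k] by (simp add: Kr_def)
  have Klo: "Kr k \<le> real (K k)" for k unfolding K_def by (rule real_nat_ceiling_ge)
  have Kup: "real (K k) \<le> Kr k + 1" for k unfolding K_def by (rule nat_ceil_up[OF Kr0])
  have K7: "real (K k) \<le> 7 * real m" for k using Kup[of k] m by (simp add: Kr_def)
  define \<rho> where "\<rho> P Q k = ev P Q (rd k) of_bool" for P Q k
  have \<rho>01: "0 \<le> \<rho> P Q k" "\<rho> P Q k \<le> 1" for P Q k unfolding \<rho>_def by (rule ev01)+
  have evt: "ev P Q t of_bool = (\<Prod>k<NL. (1 - \<rho> P Q k) ^ K k)" for P Q
    unfolding t_def ev_allv lv_def ev_lv \<rho>_def by simp
  have f01: "0 \<le> (1 - \<rho> P Q k) ^ K k \<and> (1 - \<rho> P Q k) ^ K k \<le> 1" for P Q k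
    using \<rho>01[of P Q k] by (auto intro: power_le_one)
  have null: "ev P Q t of_bool \<ge> 2/3" if H: "\<forall>i\<in>{1..m}. P i = Q i" for P Q
  proof -
    have rb: "\<rho> P Q k \<le> (1/4)^r" for k
      unfolding \<rho>_def rd_def using H m dpos r1 nnd by (intro rnd_null) auto
    have "1 - (\<Sum>k<NL. 1 - (1 - \<rho> P Q k) ^ K k) \<le> ev P Q t of_bool"
      unfolding evt by (rule prod_ge) (auto simp: f01)
    moreover have "(\<Sum>k<NL. 1 - (1 - \<rho> P Q k) ^ K k) \<le> (\<Sum>k<NL. 7 * real m * (1/4)^r)"
    proof (rule sum_mono)
      fix k
      have "1 + real (K k) * (- \<rho> P Q k) \<le> (1 + - \<rho> P Q k) ^ K k"
        using \<rho>01[of P Q k] by (intro Bernoulli_inequality) auto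
      moreover have "real (K k) * \<rho> P Q k \<le> 7 * real m * (1/4)^r"
        using K7[of k] rb[of k] \<rho>01[of P Q k] by (intro mult_mono) auto
      ultimately show "1 - (1 - \<rho> P Q k) ^ K k \<le> 7 * real m * (1/4)^r" by simp
    qed
    moreover have "(\<Sum>k<NL. 7 * real m * (1/4::real)^r) \<le> 1/3"
    proof -
      have "real (21*m*NL) < real ((4::nat)^r)" using r0(2) r_def by (simp only: of_nat_less_iff)
      then have "21 * real m * real NL < 4^r" by simp
      then show ?thesis by (simp add: field_simps power_one_over)
    qed
    ultimately show ?thesis by linarith
  qed
  have alt: "ev P Q t of_bool \<le> 1/3" if H: "(\<Sum>i=1..m. (pr1 P Q i True - pr1 P Q i False)^2) > m * a" for P Q
  proof -
    define x where "x i = (pr1 P Q i True - pr1 P Q i False)^2" for i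
    have x01: "0 \<le> x i \<and> x i \<le> 1" for i
    proof -
      have "\<bar>pr1 P Q i True - pr1 P Q i False\<bar> \<le> 1" using pr1_bounds[of P Q i True] pr1_bounds[of P Q i False] by (simp add: abs_le_iff)
      then show ?thesis unfolding x_def by (simp add: abs_square_le_1)  
    qed
    obtain k where k: "k \<le> L" and kG: "6 * real m \<le> real (card {i\<in>{1..m}. dd m a k \<le> x i}) * Kr k"
      using comb[of m a L x] m a L1 x01 H unfolding x_def Kr_def d_def by force
    define G where "G = real (card {i\<in>{1..m}. d k \<le> (pr1 P Q i True - pr1 P Q i False)^2})"
    have kG': "6 * real m \<le> G * Kr k" using kG unfolding G_def x_def d_def .
    have G0: "0 \<le> G" by (simp add: G_def)
    have rl: "\<rho> P Q k \<ge> 3/4 * G / (2 * m)"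
      using rnd_alt[where m=m and k=L and d="d k" and r=r and n="nn k" and P=P and Q=Q] m mL dpos[of k] r1 nnd[of k]
      unfolding \<rho>_def rd_def G_def by simp
    have "real (K k) * \<rho> P Q k \<ge> Kr k * (3/4 * G / (2 * m))"
      using Klo[of k] rl Kr0[of k] G0 m \<rho>01[of P Q k] by (intro mult_mono) auto
    moreover have "Kr k * (3/4 * G / (2 * m)) = 3/8 * (G * Kr k) / m" using m by (simp add: field_simps)
    moreover have "3/8 * (G * Kr k) / m \<ge> 3/8 * (6 * m) / m" using kG' m by (intro divide_right_mono mult_left_mono) auto
    moreover have "3/8 * (6 * real m) / real m = 9/4" using m by simp
    ultimately have KR: "real (K k) * \<rho> P Q k \<ge> 9/4" by linarith
    have "ev P Q t of_bool \<le> (1 - \<rho> P Q k) ^ K k"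
      unfolding evt by (rule prod_le_factor) (use k NL_def f01 in auto)
    also have "\<dots> \<le> 1 / (1 + real (K k) * \<rho> P Q k)" using \<rho>01 by (rule pow_le_recip)
    also have "\<dots> \<le> 1 / (1 + 9/4)" using KR by (intro divide_left_mono) auto
    finally show ?thesis by simp
  qed
  have NLb: "real NL \<le> 3 * (1 + ln (real m))" unfolding NL_def using ln_NL[OF m L2] by simp
  have rb: "real r \<le> 4 * (1 + ln (real m))" unfolding r_def using ln_r[OF m NLb r0(1)] by simp
  have per: "real (K k) * real (nn k) \<le> 249 * real NL * real r / a" if "k \<le> L" for k
  proof -
    define c where "c = 24 * real NL / a"
    have c0: "0 \<le> c" using a by (simp add: c_def)
    have Krc: "Kr k \<le> c * min 1 (d k)" unfolding Kr_def c_def NL_def by (simp add: field_simps)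
    have Krc': "Kr k \<le> c" using Krc c0 by (smt (verit) mult_left_le min.cobounded1)
    have "Kr k * (8 * real r / d k) \<le> c * min 1 (d k) * (8 * real r / d k)"
      using Krc dpos[of k] by (intro mult_right_mono) auto
    also have "\<dots> = c * 8 * real r * (min 1 (d k) / d k)" by (simp add: field_simps)
    also have "\<dots> \<le> c * 8 * real r * 1"
      using c0 dpos[of k] by (intro mult_left_mono) (auto simp: field_simps)
    finally have t1: "Kr k * (8 * real r / d k) \<le> 8 * real r * c" by (simp add: mult_ac)
    have t3: "8 * real r / d k \<le> 32 * real r / a"
    proof -
      have "8 * real r / d k \<le> 8 * real r / (a/4)" using dlow[OF that] a by (intro divide_left_mono) auto
      then show ?thesis by simp
    qed
    have t4: "1 \<le> 1 / a" using a by simp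
    have nnup: "real (nn k) \<le> 8 * real r / d k + 1"
      unfolding nn_def by (rule nat_ceil_up) (use dpos[of k] in simp)
    have "real (K k) * real (nn k) \<le> (Kr k + 1) * (8 * real r / d k + 1)"
      using Kup nnup Kr0[of k] by (intro mult_mono) auto
    also have "\<dots> = Kr k * (8 * real r / d k) + Kr k + 8 * real r / d k + 1" by (simp add: ring_distribs add_divide_distrib)
    also have "\<dots> \<le> 8 * real r * c + c + 32 * real r / a + 1 / a" using t1 Krc' t3 t4 by linarith
    also have "\<dots> = (192 * real NL * real r + 24 * real NL + 32 * real r + 1) / a"
      unfolding c_def by (simp add: add_divide_distrib algebra_simps)
    also have "\<dots> \<le> 249 * real NL * real r / a"
    proof -
      have h: "1 \<le> real NL" "1 \<le> real r" using r1 by (auto simp: NL_def)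
      have "24 * real NL * 1 \<le> 24 * real NL * real r" using h by (intro mult_left_mono) auto
      moreover have "32 * 1 * real r \<le> 32 * real NL * real r" using h by (intro mult_right_mono mult_left_mono) auto
      moreover have "1 * 1 \<le> real NL * real r" using h by (intro mult_mono) auto
      ultimately have "24 * real NL \<le> 24 * real NL * real r" "32 * real r \<le> 32 * real NL * real r" "1 \<le> real NL * real r"
        by simp_all
      then have "192 * real NL * real r + 24 * real NL + 32 * real r + 1 \<le> 249 * real NL * real r" by linarith
      then show ?thesis using a by (intro divide_right_mono) auto
    qed
    finally show ?thesis .
  qed
  have "real (ns t) \<le> real (\<Sum>k<NL. ns (lv k))" unfolding t_def using ns_allv by (simp only: of_nat_le_iff)
  also have "\<dots> \<le> (\<Sum>k<NL. 2 * real r * (249 * real NL * real r / a))"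
    unfolding of_nat_sum
  proof (rule sum_mono)
    fix k assume "k \<in> {..<NL}"
    then have kL: "k \<le> L" by (simp add: NL_def)
    have "ns (lv k) \<le> K k * (2 * r * nn k)"
      unfolding lv_def using ns_lv[of "K k" "rd k"] ns_rnd[of r "nn k" m L "d k"] unfolding rd_def
      by (meson le_trans mult_le_mono2)
    then have "real (ns (lv k)) \<le> 2 * real r * (real (K k) * real (nn k))"
      by (metis (mono_tags, lifting) of_nat_le_iff of_nat_mult mult.commute mult.left_commute of_nat_numeral)
    also have "\<dots> \<le> 2 * real r * (249 * real NL * real r / a)"
      using per[OF kL] by (intro mult_left_mono) auto
    finally show "real (ns (lv k)) \<le> 2 * real r * (249 * real NL * real r / a)" .
  qed
  also have "\<dots> = 498 * (real NL)^2 * (real r)^2 / a" by (simp add: power2_eq_square field_simps)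
  also have "\<dots> \<le> 498 * (3 * (1 + ln (real m)))^2 * (4 * (1 + ln (real m)))^2 / a"
    using NLb rb a by (intro divide_right_mono mult_mono power_mono) auto
  also have "\<dots> \<le> 72000 * (1 + ln (real m))^4 / a"
  proof -
    have y0: "0 \<le> (1 + ln (real m))^4" using m by simp
    have "498 * (3 * (1 + ln (real m)))^2 * (4 * (1 + ln (real m)))^2 = 71712 * (1 + ln (real m))^4"
      by (rule poly_id)
    then have "498 * (3 * (1 + ln (real m)))^2 * (4 * (1 + ln (real m)))^2 \<le> 72000 * (1 + ln (real m))^4"
      using y0 by simp
    then show ?thesis using a by (intro divide_right_mono) auto
  qed
  finally show ?thesis using null alt by blast
qed


lemma l2sq_eq: "l2sq p q = 2 * (pmf p True - pmf q True)^2"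
  unfolding l2sq_def by (simp add: UNIV_bool pmf_False_conv_True power2_eq_square algebra_simps)

lemma l2sq_le2: "l2sq p q \<le> 2"
proof -
  have "\<bar>pmf p True - pmf q True\<bar> \<le> 1" unfolding abs_le_iff
    using pmf_le_1[of p True] pmf_le_1[of q True] pmf_nonneg[of p True] pmf_nonneg[of q True] by linarith
  then have "(pmf p True - pmf q True)^2 \<le> 1" by (simp add: abs_square_le_1)
  then show ?thesis by (simp add: l2sq_eq)
qed

theorem mainTheorem2:
  "\<exists>C::real. C > 0 \<and>
    (\<forall>(m::nat) (\<epsilon>::real). m \<ge> 1 \<longrightarrow> \<epsilon> > 0 \<longrightarrow>
      (\<exists>A::alg.
         real (num_samples A) \<le> C * (1 + ln (real m)) ^ 4 / \<epsilon>^2 \<and>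
         (\<forall>P Q :: nat \<Rightarrow> bool pmf.
            ((\<forall>i\<in>{1..m}. P i = Q i) \<longrightarrow> measure_pmf.prob (run P Q A) {True} \<ge> 2/3) \<and>
            ((1 / real m) * (\<Sum>i=1..m. l2sq (P i) (Q i)) > \<epsilon>^2 \<longrightarrow>
               measure_pmf.prob (run P Q A) {False} \<ge> 2/3))))"
proof (intro exI[of _ 150000] conjI allI impI)
  fix m :: nat and \<epsilon> :: real
  assume m: "m \<ge> 1" and e: "\<epsilon> > 0"
  have lm: "0 \<le> ln (real m)" using m by simp
  have y0: "0 \<le> (1 + ln (real m))^4" using lm by simp
  have e2: "\<epsilon>^2 > 0" using e by simp
  show "\<exists>A::alg.
         real (num_samples A) \<le> 150000 * (1 + ln (real m)) ^ 4 / \<epsilon>^2 \<and>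
         (\<forall>P Q :: nat \<Rightarrow> bool pmf.
            ((\<forall>i\<in>{1..m}. P i = Q i) \<longrightarrow> measure_pmf.prob (run P Q A) {True} \<ge> 2/3) \<and>
            ((1 / real m) * (\<Sum>i=1..m. l2sq (P i) (Q i)) > \<epsilon>^2 \<longrightarrow>
               measure_pmf.prob (run P Q A) {False} \<ge> 2/3))"
  proof (cases "\<epsilon>^2 \<ge> 2")
    case True
    show ?thesis
    proof (intro exI[of _ "Done True"] conjI allI impI)
      show "real (num_samples (Done True)) \<le> 150000 * (1 + ln (real m)) ^ 4 / \<epsilon>^2"
        using y0 e2 by simp
    next
      fix P Q :: "nat \<Rightarrow> bool pmf"
      show "measure_pmf.prob (run P Q (Done True)) {True} \<ge> 2/3" by simp
      assume H: "(1 / real m) * (\<Sum>i=1..m. l2sq (P i) (Q i)) > \<epsilon>^2"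
      have "(\<Sum>i=1..m. l2sq (P i) (Q i)) \<le> (\<Sum>i=1..m. 2)" by (rule sum_mono) (rule l2sq_le2)
      then have "(1 / real m) * (\<Sum>i=1..m. l2sq (P i) (Q i)) \<le> 2" using m by (simp add: field_simps)
      then show "measure_pmf.prob (run P Q (Done True)) {False} \<ge> 2/3" using H True by linarith
    qed
  next
    case False
    define a where "a = \<epsilon>^2 / 2"
    have a: "0 < a" "a < 1" using False e2 by (auto simp: a_def)
    obtain t where t: "real (ns t) \<le> 72000 * (1 + ln (real m))^4 / a"
      "\<And>P Q. (\<forall>i\<in>{1..m}. P i = Q i) \<Longrightarrow> ev P Q t of_bool \<ge> 2/3"
      "\<And>P Q. (\<Sum>i=1..m. (pr1 P Q i True - pr1 P Q i False)^2) > m * a \<Longrightarrow> ev P Q t of_bool \<le> 1/3"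
      using core[OF m a] by blast
    show ?thesis
    proof (intro exI[of _ "toalg t"] conjI allI impI)
      have "72000 * (1 + ln (real m))^4 / a = 144000 * (1 + ln (real m))^4 / \<epsilon>^2"
        unfolding a_def by simp
      also have "\<dots> \<le> 150000 * (1 + ln (real m))^4 / \<epsilon>^2"
        using y0 e2 by (intro divide_right_mono mult_right_mono) auto
      finally show "real (num_samples (toalg t)) \<le> 150000 * (1 + ln (real m)) ^ 4 / \<epsilon>^2"
        using t(1) by (simp add: ns_toalg)
    next
      fix P Q :: "nat \<Rightarrow> bool pmf"
      assume "\<forall>i\<in>{1..m}. P i = Q i"
      then show "measure_pmf.prob (run P Q (toalg t)) {True} \<ge> 2/3"
        using t(2)[of P Q] by (simp add: measure_pmf_single bridge)
    next
      fix P Q :: "nat \<Rightarrow> bool pmf"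
      assume H: "(1 / real m) * (\<Sum>i=1..m. l2sq (P i) (Q i)) > \<epsilon>^2"
      have "(\<Sum>i=1..m. l2sq (P i) (Q i)) = 2 * (\<Sum>i=1..m. (pr1 P Q i True - pr1 P Q i False)^2)"
        by (simp add: l2sq_eq pr1_def sum_distrib_left)
      then have "(\<Sum>i=1..m. (pr1 P Q i True - pr1 P Q i False)^2) > m * a"
        using H m unfolding a_def by (simp add: field_simps)
      then show "measure_pmf.prob (run P Q (toalg t)) {False} \<ge> 2/3"
        using t(3)[of P Q] by (simp add: measure_pmf_single bridgeF)
    qed
  qed
qed (simp)

end
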